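(* Let $\mathcal{H}=\mathbb{C}^d$ and let $|e\rangle$ be a unit vector orthogonal to $\mathcal{H}$ in $\mathcal{H}\oplus\mathrm{span}\{|e\rangle\}$. For $\epsilon\in[0,1]$ let $\mathcal{E}_\epsilon(\rho)=\epsilon\rho+(1-\epsilon)|e\rangle\langle e|$ be the erasure channel. Then for any $\epsilon_1,\epsilon_2\in[0,1]$, a single-system probe is sufficient for distinguishing $\mathcal{E}_{\epsilon_1}$ and $\mathcal{E}_{\epsilon_2}$: the maximum of the success probability over single-system probes equals its maximum over all probes, including entangled probes with an arbitrary ancilla.
   Context: For two channels chosen with equal priors $1/2$, the single-shot success probability with a single-system probe $\rho$ on $\mathcal{H}$ is $\frac12+\frac14\|\mathcal{N}_1(\rho)-\mathcal{N}_2(\rho)\|_1$, and with a bipartite probe $\rho_{AB}$ on $\mathcal{H}\otimes\mathbb{C}^{d'}$ (any finite $d'$; channel acting on $A$, identity on $B$) it is $\frac12+\frac14\|(\mathcal{N}_1\otimes\mathrm{id})(\rho_{AB})-(\mathcal{N}_2\otimes\mathrm{id})(\rho_{AB})\|_1$; $\|\cdot\|_1$ is the trace norm. *)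

theory Defs
  imports Complex_Main "Jordan_Normal_Form.Matrix"
begin

definition adj :: "complex mat \<Rightarrow> complex mat" where
  "adj A = mat (dim_col A) (dim_row A) (\<lambda>(i,j). cnj (A $$ (j,i)))"

definition mtrace :: "complex mat \<Rightarrow> complex" where
  "mtrace A = (\<Sum>i<dim_row A. A $$ (i,i))"

definition psd :: "nat \<Rightarrow> complex mat \<Rightarrow> bool" where
  "psd n A \<longleftrightarrow> A \<in> carrier_mat n n \<and>
     (\<forall>v \<in> carrier_vec n.
        let q = (\<Sum>i<n. \<Sum>j<n. cnj (v $ i) * A $$ (i,j) * v $ j) in Im q = 0 \<and> Re q \<ge> 0)"

definition density :: "nat \<Rightarrow> complex mat \<Rightarrow> bool" where
  "density n \<rho> \<longleftrightarrow> psd n \<rho> \<and> mtrace \<rho> = 1"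

text \<open>Trace norm ||A||_1 = tr sqrt(A^* A), with sqrt the unique PSD square root.\<close>
definition trace_norm :: "complex mat \<Rightarrow> real" where
  "trace_norm A = Re (mtrace (THE B. psd (dim_col A) B \<and> B * B = adj A * A))"

text \<open>Embedding of an operator on H = C^d into H (+) span{e} = C^(d+1); e is the last basis vector.\<close>
definition embedH :: "nat \<Rightarrow> complex mat \<Rightarrow> complex mat" where
  "embedH d \<rho> = mat (Suc d) (Suc d) (\<lambda>(i,j). if i < d \<and> j < d then \<rho> $$ (i,j) else 0)"

definition eproj :: "nat \<Rightarrow> complex mat" where
  "eproj d = mat (Suc d) (Suc d) (\<lambda>(i,j). if i = d \<and> j = d then 1 else 0)"

text \<open>Erasure channel E_eps(rho) = eps rho + (1-eps) tr(rho) |e><e| (linear extension;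
  equals eps rho + (1-eps)|e><e| on states).\<close>
definition erasure :: "nat \<Rightarrow> real \<Rightarrow> complex mat \<Rightarrow> complex mat" where
  "erasure d \<epsilon> \<rho> = complex_of_real \<epsilon> \<cdot>\<^sub>m embedH d \<rho>
      + (complex_of_real (1 - \<epsilon>) * mtrace \<rho>) \<cdot>\<^sub>m eproj d"

text \<open>(N (x) id)(X) for a linear map N from d x d to m x m matrices, X on C^d (x) C^d',
  with basis index (a,b) \<mapsto> a * d' + b:  (N (x) id)(X) = sum_{b,b'} N(X^{b b'}) (x) |b><b'|.\<close>
definition block :: "nat \<Rightarrow> nat \<Rightarrow> complex mat \<Rightarrow> nat \<Rightarrow> nat \<Rightarrow> complex mat" where
  "block d d' X b b' = mat d d (\<lambda>(a,a'). X $$ (a * d' + b, a' * d' + b'))"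

definition tensor_id :: "nat \<Rightarrow> nat \<Rightarrow> nat \<Rightarrow> (complex mat \<Rightarrow> complex mat) \<Rightarrow> complex mat \<Rightarrow> complex mat" where
  "tensor_id d m d' N X = mat (m * d') (m * d')
      (\<lambda>(i,j). N (block d d' X (i mod d') (j mod d')) $$ (i div d', j div d'))"

end

theory Submission
  imports Defs "Jordan_Normal_Form.Schur_Decomposition"
begin

definition sf :: "nat \<Rightarrow> complex mat \<Rightarrow> complex vec \<Rightarrow> complex vec \<Rightarrow> complex" where
  "sf n A u w = (\<Sum>i<n. \<Sum>j<n. cnj (u $ i) * A $$ (i,j) * w $ j)"

lemma psd_alt: "psd n A \<longleftrightarrow> A \<in> carrier_mat n n \<and>
   (\<forall>v \<in> carrier_vec n. Im (sf n A v v) = 0 \<and> Re (sf n A v v) \<ge> 0)"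
  unfolding psd_def sf_def Let_def by simp

lemma sf_add:
  assumes "u \<in> carrier_vec n" "w \<in> carrier_vec n"
  shows "sf n A (u + c \<cdot>\<^sub>v w) (u + c \<cdot>\<^sub>v w) = sf n A u u + cnj c * c * sf n A w w + c * sf n A u w + cnj c * sf n A w u"
proof -
  have "sf n A (u + c \<cdot>\<^sub>v w) (u + c \<cdot>\<^sub>v w) = (\<Sum>i<n. \<Sum>j<n. cnj (u $ i) * A $$ (i,j) * u $ j
     + cnj c * c * (cnj (w $ i) * A $$ (i,j) * w $ j) + c * (cnj (u $ i) * A $$ (i,j) * w $ j)
     + cnj c * (cnj (w $ i) * A $$ (i,j) * u $ j))"
    unfolding sf_def using assms by (intro sum.cong refl) (simp add: algebra_simps)
  also have "\<dots> = sf n A u u + cnj c * c * sf n A w w + c * sf n A u w + cnj c * sf n A w u"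
    unfolding sf_def by (simp add: sum.distrib sum_distrib_left)
  finally show ?thesis .
qed

lemma sf_unit: "sf n A (unit_vec n i) (unit_vec n j) = A $$ (i,j)" if "i < n" "j < n"
proof -
  have e: "\<And>x::complex. \<And>P. x * (if P then 1 else 0) = (if P then x else 0)" by simp
  have e2: "\<And>x::complex. \<And>P. cnj (if P then 1 else 0) * x = (if P then x else 0)" by simp
  show ?thesis unfolding sf_def using that by (simp add: unit_vec_def e e2 sum.delta)
qed

lemma psd_herm:
  assumes "psd n A" "i < n" "j < n"
  shows "A $$ (j,i) = cnj (A $$ (i,j))"
proof -
  let ?u = "unit_vec n i" and ?w = "unit_vec n j"
  have u: "?u \<in> carrier_vec n" and w: "?w \<in> carrier_vec n" by auto
  have P: "\<And>v. v \<in> carrier_vec n \<Longrightarrow> Im (sf n A v v) = 0" using assms(1) unfolding psd_alt by blast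
  have ii: "Im (A $$ (i,i)) = 0" using P[OF u] sf_unit[OF assms(2,2)] by simp
  have jj: "Im (A $$ (j,j)) = 0" using P[OF w] sf_unit[OF assms(3,3)] by simp
  have "?u + 1 \<cdot>\<^sub>v ?w \<in> carrier_vec n" using u w by simp
  from P[OF this] have "Im (A $$ (i,j)) + Im (A $$ (j,i)) = 0"
    unfolding sf_add[OF u w] sf_unit[OF assms(2,3)] sf_unit[OF assms(3,2)]
      sf_unit[OF assms(2,2)] sf_unit[OF assms(3,3)] using ii jj by simp
  moreover have "?u + \<i> \<cdot>\<^sub>v ?w \<in> carrier_vec n" using u w by simp
  from P[OF this] have "Re (A $$ (i,j)) - Re (A $$ (j,i)) = 0"
    unfolding sf_add[OF u w] sf_unit[OF assms(2,3)] sf_unit[OF assms(3,2)]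
      sf_unit[OF assms(2,2)] sf_unit[OF assms(3,3)] using ii jj by simp
  ultimately show ?thesis by (simp add: complex_eq_iff)
qed

definition ip :: "nat \<Rightarrow> complex vec \<Rightarrow> complex vec \<Rightarrow> complex" where
  "ip n u w = (\<Sum>i<n. cnj (u $ i) * w $ i)"

lemma mv_index: "A \<in> carrier_mat n n \<Longrightarrow> w \<in> carrier_vec n \<Longrightarrow> i < n \<Longrightarrow>
   (A *\<^sub>v w) $ i = (\<Sum>j<n. A $$ (i,j) * w $ j)"
  by (simp add: scalar_prod_def atLeast0LessThan)

lemma sf_ip: assumes "A \<in> carrier_mat n n" "w \<in> carrier_vec n"
  shows "sf n A u w = ip n u (A *\<^sub>v w)"
  unfolding sf_def ip_def using assms by (simp add: mv_index[OF assms] sum_distrib_left mult.assoc del: index_mult_mat_vec)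

lemma ip_add: "v \<in> carrier_vec n \<Longrightarrow> w \<in> carrier_vec n \<Longrightarrow> ip n u (v + w) = ip n u v + ip n u w"
  unfolding ip_def by (simp add: sum.distrib algebra_simps)
lemma ip_minus: "v \<in> carrier_vec n \<Longrightarrow> w \<in> carrier_vec n \<Longrightarrow> ip n u (v - w) = ip n u v - ip n u w"
  unfolding ip_def by (simp add: sum_subtractf algebra_simps)
lemma ip_smult2: "w \<in> carrier_vec n \<Longrightarrow> ip n u (c \<cdot>\<^sub>v w) = c * ip n u w"
  unfolding ip_def by (simp add: sum_distrib_left algebra_simps)
lemma ip_smult1: "u \<in> carrier_vec n \<Longrightarrow> ip n (c \<cdot>\<^sub>v u) w = cnj c * ip n u w"
  unfolding ip_def by (simp add: sum_distrib_left algebra_simps)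

definition herm :: "nat \<Rightarrow> complex mat \<Rightarrow> bool" where
  "herm n A \<longleftrightarrow> A \<in> carrier_mat n n \<and> (\<forall>i<n. \<forall>j<n. A $$ (j,i) = cnj (A $$ (i,j)))"

lemma psd_herm': "psd n A \<Longrightarrow> herm n A"
  unfolding herm_def using psd_herm psd_def by blast

lemma ip_herm: assumes "herm n A" "u \<in> carrier_vec n" "w \<in> carrier_vec n"
  shows "ip n u (A *\<^sub>v w) = ip n (A *\<^sub>v u) w"
proof -
  have A: "A \<in> carrier_mat n n" using assms(1) herm_def by auto
  have "ip n (A *\<^sub>v u) w = (\<Sum>i<n. cnj (\<Sum>j<n. A $$ (i,j) * u $ j) * w $ i)"
    unfolding ip_def by (intro sum.cong refl, subst mv_index[OF A assms(2)]) auto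
  also have "\<dots> = (\<Sum>i<n. \<Sum>j<n. cnj (A $$ (i,j)) * cnj (u $ j) * w $ i)"
    by (simp only: cnj_sum complex_cnj_mult sum_distrib_right)
  also have "\<dots> = (\<Sum>i<n. \<Sum>j<n. A $$ (j,i) * cnj (u $ j) * w $ i)"
  proof (intro sum.cong refl)
    fix i j assume "i \<in> {..<n}" "j \<in> {..<n}"
    then have h: "A $$ (j,i) = cnj (A $$ (i,j))" using assms(1) unfolding herm_def by blast
    show "cnj (A $$ (i,j)) * cnj (u $ j) * w $ i = A $$ (j,i) * cnj (u $ j) * w $ i"
      by (simp only: h)
  qed
  also have "\<dots> = (\<Sum>j<n. \<Sum>i<n. A $$ (j,i) * cnj (u $ j) * w $ i)"
    by (rule sum.swap)
  also have "\<dots> = (\<Sum>j<n. cnj (u $ j) * (\<Sum>i<n. A $$ (j,i) * w $ i))"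
    by (simp only: sum_distrib_left) (simp only: mult.commute mult.left_commute)
  also have "\<dots> = ip n u (A *\<^sub>v w)"
    unfolding ip_def by (intro sum.cong refl, subst mv_index[OF A assms(3)]) auto
  finally show ?thesis by simp
qed

lemma ip_self: "ip n x x = complex_of_real (\<Sum>i<n. (cmod (x $ i))^2)"
proof -
  have "ip n x x = (\<Sum>i<n. complex_of_real ((cmod (x $ i))^2))"
    unfolding ip_def by (intro sum.cong refl) (subst complex_norm_square, rule mult.commute)
  then show ?thesis by (simp only: of_real_sum)
qed

lemma ip_self_pos: assumes "x \<in> carrier_vec n" "x \<noteq> 0\<^sub>v n"
  shows "(\<Sum>i<n. (cmod (x $ i))^2) > 0"
proof (rule ccontr)
  assume "\<not> ?thesis"
  then have "(\<Sum>i<n. (cmod (x $ i))^2) = 0"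
    by (meson not_less order_antisym sum_nonneg zero_le_power2)
  then have "\<forall>i\<in>{..<n}. (cmod (x $ i))^2 = 0" by (subst (asm) sum_nonneg_eq_0_iff) auto
  then have "x = 0\<^sub>v n" using assms(1) by (intro eq_vecI) auto
  then show False using assms(2) by simp
qed

lemma mtrace_comm: assumes "A \<in> carrier_mat n n" "B \<in> carrier_mat n n"
  shows "mtrace (A * B) = mtrace (B * A)"
proof -
  have "mtrace (A * B) = (\<Sum>i<n. \<Sum>j<n. A $$ (i,j) * B $$ (j,i))"
    unfolding mtrace_def using assms by (simp add: scalar_prod_def atLeast0LessThan)
  also have "\<dots> = (\<Sum>j<n. \<Sum>i<n. B $$ (j,i) * A $$ (i,j))"
    by (subst sum.swap) (simp add: mult.commute)
  also have "\<dots> = mtrace (B * A)"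
    unfolding mtrace_def using assms by (simp add: scalar_prod_def atLeast0LessThan)
  finally show ?thesis .
qed

lemma alg_aux: "c = a + m * p \<Longrightarrow> a - b = m * q \<Longrightarrow> c = b \<Longrightarrow> m * (p + q) = (0::complex)"
proof -
  assume h: "c = a + m * p" "a - b = m * q" "c = b"
  then have "m * q = a - (a + m * p)" by simp
  then have "m * q = - (m * p)" by simp
  then show ?thesis by (simp add: distrib_left)
qed

lemma herm_eigen_zero:
  assumes B: "psd n B" and C: "psd n C" and BC: "B * B = C * C"
    and ev: "eigenvalue (B - C) \<mu>"
  shows "\<mu> = 0"
proof (rule ccontr)
  assume mu0: "\<mu> \<noteq> 0"
  have Bc: "B \<in> carrier_mat n n" and Cc: "C \<in> carrier_mat n n" using B C psd_def by auto
  define D where "D = B - C"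
  have Dc: "D \<in> carrier_mat n n" using Bc Cc D_def by (simp add: minus_carrier_mat)
  have Dh: "herm n D" unfolding herm_def
  proof (intro conjI allI impI)
    show "D \<in> carrier_mat n n" by (rule Dc)
    fix i j assume ij: "i < n" "j < n"
    have h1: "B $$ (j,i) = cnj (B $$ (i,j))" by (rule psd_herm[OF B ij])
    have h2: "C $$ (j,i) = cnj (C $$ (i,j))" by (rule psd_herm[OF C ij])
    have "D $$ (j,i) = B $$ (j,i) - C $$ (j,i)" "D $$ (i,j) = B $$ (i,j) - C $$ (i,j)"
      unfolding D_def using Bc Cc ij by auto
    then show "D $$ (j,i) = cnj (D $$ (i,j))" by (simp only: h1 h2 complex_cnj_diff)
  qed
  obtain x where x: "x \<in> carrier_vec n" "x \<noteq> 0\<^sub>v n" "D *\<^sub>v x = \<mu> \<cdot>\<^sub>v x"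
    using ev Dc unfolding eigenvalue_def eigenvector_def D_def by auto
  define z where "z = B *\<^sub>v x"
  define y where "y = C *\<^sub>v x"
  have z: "z \<in> carrier_vec n" and y: "y \<in> carrier_vec n" using Bc Cc x unfolding z_def y_def by auto
  have zy: "z = y + \<mu> \<cdot>\<^sub>v x"
  proof -
    have "D *\<^sub>v x = z - y" unfolding D_def z_def y_def using Bc Cc x by (simp add: minus_mult_distrib_mat_vec)
    then have "z - y = \<mu> \<cdot>\<^sub>v x" using x by simp
    note eq = this
    show ?thesis
    proof (intro eq_vecI)
      fix i assume i: "i < dim_vec (y + \<mu> \<cdot>\<^sub>v x)"
      then have "(z - y) $ i = (\<mu> \<cdot>\<^sub>v x) $ i" using eq by simp
      then have "z $ i - y $ i = \<mu> * x $ i" using i y x z by simp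
      then show "z $ i = (y + \<mu> \<cdot>\<^sub>v x) $ i" using i y x z by (simp add: diff_eq_eq add.commute)
    next
      show "dim_vec z = dim_vec (y + \<mu> \<cdot>\<^sub>v x)" using y z x by simp
    qed
  qed
  have qB: "Im (ip n x z) = 0 \<and> Re (ip n x z) \<ge> 0"
    using B x(1) unfolding psd_alt z_def sf_ip[OF Bc x(1), symmetric] by blast
  have qC: "Im (ip n x y) = 0 \<and> Re (ip n x y) \<ge> 0"
    using C x(1) unfolding psd_alt y_def sf_ip[OF Cc x(1), symmetric] by blast
  define r where "r = (\<Sum>i<n. (cmod (x $ i))^2)"
  have r: "r > 0" using ip_self_pos[OF x(1,2)] r_def by simp
  have "ip n x (D *\<^sub>v x) = ip n x z - ip n x y"
    unfolding D_def z_def y_def using Bc Cc x by (simp add: minus_mult_distrib_mat_vec ip_minus)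
  also have "ip n x (D *\<^sub>v x) = \<mu> * r" using x ip_smult2 ip_self r_def by simp
  finally have muR: "\<mu> * r = ip n x z - ip n x y" .
  have "Im (\<mu> * complex_of_real r) = 0" using muR qB qC by simp
  then have "Im \<mu> * r = 0" by simp
  then have Imu: "Im \<mu> = 0" using r by simp
  then have cmu: "cnj \<mu> = \<mu>" by (simp add: complex_eq_iff)
  have "ip n x ((B * B) *\<^sub>v x) = ip n x ((C * C) *\<^sub>v x)" using BC by simp
  then have e1: "ip n x (B *\<^sub>v z) = ip n x (C *\<^sub>v y)" unfolding z_def y_def using Bc Cc x by simp
  have "ip n x (B *\<^sub>v z) = ip n x (B *\<^sub>v y) + \<mu> * ip n x z"
  proof -
    have "B *\<^sub>v z = B *\<^sub>v (y + \<mu> \<cdot>\<^sub>v x)" using zy by simp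
    also have "\<dots> = B *\<^sub>v y + \<mu> \<cdot>\<^sub>v (B *\<^sub>v x)" using Bc y x
      by (simp add: mult_add_distrib_mat_vec mult_mat_vec)
    finally have "B *\<^sub>v z = B *\<^sub>v y + \<mu> \<cdot>\<^sub>v z" unfolding z_def .
    then show ?thesis using Bc y z by (simp add: ip_add ip_smult2)
  qed
  moreover have "ip n x (B *\<^sub>v y) - ip n x (C *\<^sub>v y) = \<mu> * ip n x y"
  proof -
    have "ip n x (B *\<^sub>v y) - ip n x (C *\<^sub>v y) = ip n x (D *\<^sub>v y)"
      unfolding D_def using Bc Cc y by (simp add: minus_mult_distrib_mat_vec ip_minus)
    also have "\<dots> = ip n (D *\<^sub>v x) y" using ip_herm[OF Dh x(1) y] .
    also have "\<dots> = \<mu> * ip n x y" using x cmu by (simp add: ip_smult1)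
    finally show ?thesis .
  qed
  ultimately have "\<mu> * (ip n x z + ip n x y) = 0" using e1 alg_aux by blast
  then have "ip n x z + ip n x y = 0" using mu0 by simp
  then have "ip n x z = 0 \<and> ip n x y = 0" using qB qC by (simp add: complex_eq_iff)
  then have "\<mu> * r = 0" using muR by simp
  then show False using mu0 r by simp
qed

lemma herm_minus: assumes B: "psd n B" and C: "psd n C" shows "herm n (B - C)"
proof -
  have Bc: "B \<in> carrier_mat n n" and Cc: "C \<in> carrier_mat n n" using B C psd_def by auto
  show ?thesis unfolding herm_def
  proof (intro conjI allI impI)
    show "B - C \<in> carrier_mat n n" using Bc Cc by (simp add: minus_carrier_mat)
    fix i j assume ij: "i < n" "j < n"
    have h1: "B $$ (j,i) = cnj (B $$ (i,j))" by (rule psd_herm[OF B ij])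
    have h2: "C $$ (j,i) = cnj (C $$ (i,j))" by (rule psd_herm[OF C ij])
    have "(B - C) $$ (j,i) = B $$ (j,i) - C $$ (j,i)" "(B - C) $$ (i,j) = B $$ (i,j) - C $$ (i,j)"
      using Bc Cc ij by auto
    then show "(B - C) $$ (j,i) = cnj ((B - C) $$ (i,j))" by (simp only: h1 h2 complex_cnj_diff)
  qed
qed

lemma poly_linear_prod: "poly (\<Prod>e\<leftarrow>es. [:- e, 1:]) (a::complex) = (\<Prod>e\<leftarrow>es. a - e)"
  by (induct es) (auto simp: algebra_simps)

lemma psd_sqrt_unique:
  assumes B: "psd n B" and C: "psd n C" and BC: "B * B = C * C"
  shows "B = C"
proof -
  have Bc: "B \<in> carrier_mat n n" and Cc: "C \<in> carrier_mat n n" using B C psd_def by auto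
  define D where "D = B - C"
  have Dh: "herm n D" using herm_minus[OF B C] D_def by simp
  have Dc: "D \<in> carrier_mat n n" using Dh herm_def by auto
  obtain es where cp: "char_poly D = (\<Prod>e\<leftarrow>es. [:- e, 1:])" using char_poly_factorized[OF Dc] by auto
  obtain T P Q where sd: "schur_decomposition D es = (T,P,Q)" by (cases "schur_decomposition D es") auto
  from schur_decomposition[OF Dc cp sd] have sim: "similar_mat_wit D T P Q"
    and ut: "upper_triangular T" and dg: "diag_mat T = es" by auto
  have Tc: "T \<in> carrier_mat n n" and Pc: "P \<in> carrier_mat n n" and Qc: "Q \<in> carrier_mat n n"
    and QP: "Q * P = 1\<^sub>m n" and DPTQ: "D = P * T * Q"
    using sim Dc unfolding similar_mat_wit_def Let_def by auto
  have es0: "e = 0" if "e \<in> set es" for e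
  proof -
    have "poly (char_poly D) e = 0" unfolding cp poly_linear_prod using that
      by (simp add: prod_list_zero_iff)
    then have "eigenvalue (B - C) e" using eigenvalue_root_char_poly[OF Dc] D_def by simp
    then show ?thesis by (rule herm_eigen_zero[OF B C BC])
  qed
  have Tdiag: "T $$ (i,i) = 0" if "i < n" for i
  proof -
    have "T $$ (i,i) = diag_mat T ! i" using that Tc unfolding diag_mat_def by simp
    also have "\<dots> \<in> set es" using that Tc dg[symmetric] unfolding diag_mat_def by auto
    finally show ?thesis using es0 by blast
  qed
  have Tlow: "T $$ (i,j) = 0" if "i < n" "j < i" for i j
    using ut that Tc unfolding upper_triangular_def by auto
  have trT: "mtrace (T * T) = 0"
  proof -
    have "mtrace (T * T) = (\<Sum>i<n. \<Sum>k<n. T $$ (i,k) * T $$ (k,i))"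
      unfolding mtrace_def using Tc by (simp add: scalar_prod_def atLeast0LessThan)
    also have "\<dots> = 0"
    proof (intro sum.neutral ballI)
      fix i k assume i: "i \<in> {..<n}" and k: "k \<in> {..<n}"
      show "T $$ (i,k) * T $$ (k,i) = 0"
      proof (cases "k < i")
        case True then show ?thesis using Tlow i by simp
      next
        case False
        show ?thesis
        proof (cases "k = i")
          case True then show ?thesis using Tdiag i by simp
        next
          case False
          then have "i < k" using \<open>\<not> k < i\<close> by simp
          then show ?thesis using Tlow k by simp
        qed
      qed
    qed
    finally show ?thesis .
  qed
  have DD: "D * D = P * ((T * T) * Q)"
  proof -
    define X where "X = T * Q"
    have Xc: "X \<in> carrier_mat n n" using Tc Qc X_def by simp
    have PXc: "P * X \<in> carrier_mat n n" using Pc Xc by simp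
    have D': "D = P * X" using DPTQ assoc_mult_mat[OF Pc Tc Qc] X_def by simp
    have "D * D = P * (X * (P * X))" unfolding D' by (rule assoc_mult_mat[OF Pc Xc PXc])
    also have "X * (P * X) = T * (Q * (P * X))" apply (subst (1) X_def) by (rule assoc_mult_mat[OF Tc Qc PXc])
    also have "Q * (P * X) = X" using assoc_mult_mat[OF Qc Pc Xc] QP Xc by simp
    also have "T * X = (T * T) * Q" unfolding X_def by (rule assoc_mult_mat[OF Tc Tc Qc, symmetric])
    finally show ?thesis .
  qed
  have "mtrace (D * D) = mtrace (((T * T) * Q) * P)"
    unfolding DD by (rule mtrace_comm[OF Pc]) (use Tc Qc in simp)
  also have "((T * T) * Q) * P = (T * T) * (Q * P)"
    by (rule assoc_mult_mat) (use Tc Qc Pc in auto)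
  also have "(T * T) * (Q * P) = T * T" using QP Tc by simp
  finally have trD: "mtrace (D * D) = 0" using trT by simp
  have "mtrace (D * D) = (\<Sum>i<n. \<Sum>k<n. D $$ (i,k) * D $$ (k,i))"
    unfolding mtrace_def using Dc by (simp add: scalar_prod_def atLeast0LessThan)
  also have "\<dots> = (\<Sum>i<n. \<Sum>k<n. complex_of_real ((cmod (D $$ (i,k)))^2))"
  proof (intro sum.cong refl)
    fix i k assume "i \<in> {..<n}" "k \<in> {..<n}"
    then have h: "D $$ (k,i) = cnj (D $$ (i,k))" using Dh unfolding herm_def by blast
    show "D $$ (i,k) * D $$ (k,i) = complex_of_real ((cmod (D $$ (i,k)))^2)"
      by (simp only: h complex_norm_square)
  qed
  also have "\<dots> = complex_of_real (\<Sum>i<n. \<Sum>k<n. (cmod (D $$ (i,k)))^2)"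
    by (simp only: of_real_sum)
  finally have "(\<Sum>i<n. \<Sum>k<n. (cmod (D $$ (i,k)))^2) = 0" using trD of_real_eq_0_iff by metis
  then have "\<forall>i\<in>{..<n}. (\<Sum>k<n. (cmod (D $$ (i,k)))^2) = 0"
    by (subst (asm) sum_nonneg_eq_0_iff) (auto intro: sum_nonneg)
  then have D0: "D $$ (i,k) = 0" if "i < n" "k < n" for i k
    using that by (auto simp: sum_nonneg_eq_0_iff)
  show "B = C"
  proof (rule eq_matI)
    fix i j assume "i < dim_row C" "j < dim_col C"
    then have ij: "i < n" "j < n" using Cc by auto
    have "D $$ (i,j) = B $$ (i,j) - C $$ (i,j)" unfolding D_def using Bc Cc ij by simp
    then show "B $$ (i,j) = C $$ (i,j)" using D0[OF ij] by simp
  qed (use Bc Cc in auto)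
qed

lemma trace_norm_eq:
  assumes "dim_col A = n" "psd n B" "B * B = adj A * A"
  shows "trace_norm A = Re (mtrace B)"
proof -
  have "(THE B. psd (dim_col A) B \<and> B * B = adj A * A) = B"
    by (rule the_equality) (use assms psd_sqrt_unique in auto)
  then show ?thesis unfolding trace_norm_def by simp
qed

abbreviation fb :: "nat \<Rightarrow> nat \<Rightarrow> complex mat \<Rightarrow> complex mat \<Rightarrow> complex mat" where
  "fb m k X Y \<equiv> four_block_mat X (0\<^sub>m m k) (0\<^sub>m k m) Y"

lemma fb_index:
  assumes "X \<in> carrier_mat m m" "Y \<in> carrier_mat k k" "i < m + k" "j < m + k"
  shows "fb m k X Y $$ (i,j) = (if i < m \<and> j < m then X $$ (i,j)
     else if m \<le> i \<and> m \<le> j then Y $$ (i - m, j - m) else 0)"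
  using assms by auto

lemma herm_fb: assumes "herm m X" "herm k Y" shows "herm (m + k) (fb m k X Y)"
proof -
  have X: "X \<in> carrier_mat m m" and Y: "Y \<in> carrier_mat k k" using assms herm_def by auto
  show ?thesis unfolding herm_def
  proof (intro conjI allI impI)
    show "fb m k X Y \<in> carrier_mat (m + k) (m + k)" using X Y by simp
    fix i j assume ij: "i < m + k" "j < m + k"
    show "fb m k X Y $$ (j,i) = cnj (fb m k X Y $$ (i,j))"
    proof (cases "i < m \<and> j < m")
      case True
      then have "X $$ (j,i) = cnj (X $$ (i,j))" using assms(1) unfolding herm_def by blast
      then show ?thesis using True by (simp only: fb_index[OF X Y ij] fb_index[OF X Y ij(2,1)]) simp
    next
      case False
      show ?thesis
      proof (cases "m \<le> i \<and> m \<le> j")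
        case True
        then have "i - m < k" "j - m < k" using ij by auto
        then have "Y $$ (j-m,i-m) = cnj (Y $$ (i-m,j-m))" using assms(2) unfolding herm_def by blast
        then show ?thesis using True False by (simp only: fb_index[OF X Y ij] fb_index[OF X Y ij(2,1)] if_True if_False) simp
      next
        case False2: False
        have "fb m k X Y $$ (i,j) = 0" "fb m k X Y $$ (j,i) = 0"
          using False False2 by (auto simp: fb_index[OF X Y ij] fb_index[OF X Y ij(2,1)])
        then show ?thesis by simp
      qed
    qed
  qed
qed

lemma herm_uminus: assumes "herm k Y" shows "herm k (- Y)"
  unfolding herm_def
proof (intro conjI allI impI)
  have Y: "Y \<in> carrier_mat k k" using assms herm_def by auto
  then show "- Y \<in> carrier_mat k k" by simp
  fix i j assume ij: "i < k" "j < k"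
  then have h: "Y $$ (j,i) = cnj (Y $$ (i,j))" using assms unfolding herm_def by blast
  show "(- Y) $$ (j,i) = cnj ((- Y) $$ (i,j))" using Y ij by (simp add: h)
qed

lemma herm_smult: assumes "herm n A" shows "herm n (complex_of_real c \<cdot>\<^sub>m A)"
  unfolding herm_def
proof (intro conjI allI impI)
  have Y: "A \<in> carrier_mat n n" using assms herm_def by auto
  then show "complex_of_real c \<cdot>\<^sub>m A \<in> carrier_mat n n" by simp
  fix i j assume ij: "i < n" "j < n"
  then have h: "A $$ (j,i) = cnj (A $$ (i,j))" using assms unfolding herm_def by blast
  show "(complex_of_real c \<cdot>\<^sub>m A) $$ (j,i) = cnj ((complex_of_real c \<cdot>\<^sub>m A) $$ (i,j))" using Y ij by (simp add: h)
qed

lemma herm_adj: assumes "herm n A" shows "adj A = A"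
proof -
  have A: "A \<in> carrier_mat n n" using assms herm_def by auto
  show ?thesis
  proof (rule eq_matI)
    fix i j assume "i < dim_row A" "j < dim_col A"
    then have ij: "i < n" "j < n" using A by auto
    then have "A $$ (i,j) = cnj (A $$ (j,i))" using assms unfolding herm_def by blast
    then show "adj A $$ (i,j) = A $$ (i,j)" unfolding adj_def using A ij by simp
  qed (use A in \<open>auto simp: adj_def\<close>)
qed

lemma sum_split: "(\<Sum>i<(m::nat)+k. f i) = (\<Sum>i<m. f i) + (\<Sum>i<k. f (m + i))"
  by (induct k) (auto simp: add.assoc)

lemma psd_fb: assumes X: "psd m X" and Y: "psd k Y" shows "psd (m + k) (fb m k X Y)"
proof -
  have Xc: "X \<in> carrier_mat m m" and Yc: "Y \<in> carrier_mat k k" using X Y psd_def by auto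
  show ?thesis unfolding psd_alt
  proof (rule conjI)
    show "fb m k X Y \<in> carrier_mat (m + k) (m + k)" using Xc Yc by simp
  next
   show "\<forall>v\<in>carrier_vec (m + k). Im (sf (m + k) (fb m k X Y) v v) = 0 \<and> Re (sf (m + k) (fb m k X Y) v v) \<ge> 0"
   proof
    fix v :: "complex vec" assume v: "v \<in> carrier_vec (m + k)"
    define v1 where "v1 = vec m (\<lambda>i. v $ i)"
    define v2 where "v2 = vec k (\<lambda>i. v $ (m + i))"
    have v1: "v1 \<in> carrier_vec m" and v2: "v2 \<in> carrier_vec k" unfolding v1_def v2_def by auto
    have "sf (m + k) (fb m k X Y) v v = sf m X v1 v1 + sf k Y v2 v2"
    proof -
      have "sf (m + k) (fb m k X Y) v v =
        (\<Sum>i<m. \<Sum>j<m. cnj (v $ i) * fb m k X Y $$ (i,j) * v $ j) +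
        (\<Sum>i<m. \<Sum>j<k. cnj (v $ i) * fb m k X Y $$ (i,m+j) * v $ (m+j)) +
        ((\<Sum>i<k. \<Sum>j<m. cnj (v $ (m+i)) * fb m k X Y $$ (m+i,j) * v $ j) +
        (\<Sum>i<k. \<Sum>j<k. cnj (v $ (m+i)) * fb m k X Y $$ (m+i,m+j) * v $ (m+j)))"
        unfolding sf_def sum_split sum.distrib by (simp only: add.assoc add.commute add.left_commute)
      also have "\<dots> = sf m X v1 v1 + sf k Y v2 v2"
      proof -
        have b1: "(\<Sum>i<m. \<Sum>j<m. cnj (v $ i) * fb m k X Y $$ (i,j) * v $ j) = sf m X v1 v1"
          unfolding sf_def v1_def by (intro sum.cong refl) (simp add: fb_index[OF Xc Yc])
        have b2: "(\<Sum>i<m. \<Sum>j<k. cnj (v $ i) * fb m k X Y $$ (i,m+j) * v $ (m+j)) = 0"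
          by (intro sum.neutral ballI) (simp add: fb_index[OF Xc Yc])
        have b3: "(\<Sum>i<k. \<Sum>j<m. cnj (v $ (m+i)) * fb m k X Y $$ (m+i,j) * v $ j) = 0"
          by (intro sum.neutral ballI) (simp add: fb_index[OF Xc Yc])
        have b4: "(\<Sum>i<k. \<Sum>j<k. cnj (v $ (m+i)) * fb m k X Y $$ (m+i,m+j) * v $ (m+j)) = sf k Y v2 v2"
          unfolding sf_def v2_def by (intro sum.cong refl) (simp add: fb_index[OF Xc Yc])
        show ?thesis unfolding b1 b2 b3 b4 by simp
      qed
      finally show ?thesis .
    qed
    moreover have "Im (sf m X v1 v1) = 0 \<and> Re (sf m X v1 v1) \<ge> 0" using X v1 unfolding psd_alt by blast
    moreover have "Im (sf k Y v2 v2) = 0 \<and> Re (sf k Y v2 v2) \<ge> 0" using Y v2 unfolding psd_alt by blast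
    ultimately show "Im (sf (m + k) (fb m k X Y) v v) = 0 \<and> Re (sf (m + k) (fb m k X Y) v v) \<ge> 0"
      by simp
   qed
  qed
qed

lemma psd_smult: assumes "psd n A" "c \<ge> 0" shows "psd n (complex_of_real c \<cdot>\<^sub>m A)"
proof -
  have Ac: "A \<in> carrier_mat n n" using assms psd_def by auto
  have e: "sf n (complex_of_real c \<cdot>\<^sub>m A) v v = complex_of_real c * sf n A v v" for v
  proof -
    have "sf n (complex_of_real c \<cdot>\<^sub>m A) v v = (\<Sum>i<n. \<Sum>j<n. complex_of_real c * (cnj (v $ i) * A $$ (i,j) * v $ j))"
    proof -
      have h: "cnj (v $ i) * (complex_of_real c \<cdot>\<^sub>m A) $$ (i,j) * v $ j = complex_of_real c * (cnj (v $ i) * A $$ (i,j) * v $ j)"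
        if "i < n" "j < n" for i j
      proof -
        have "(complex_of_real c \<cdot>\<^sub>m A) $$ (i,j) = complex_of_real c * A $$ (i,j)" using Ac that by simp
        then show ?thesis by (simp add: algebra_simps)
      qed
      show ?thesis unfolding sf_def by (rule sum.cong[OF refl], rule sum.cong[OF refl]) (simp add: h)
    qed
    then show ?thesis by (simp only: sum_distrib_left sf_def)
  qed
  show ?thesis using assms Ac unfolding psd_alt e by simp
qed

lemma mtrace_fb: assumes "X \<in> carrier_mat m m" "Y \<in> carrier_mat k k"
  shows "mtrace (fb m k X Y) = mtrace X + mtrace Y"
proof -
  have "mtrace (fb m k X Y) = (\<Sum>i<m+k. fb m k X Y $$ (i,i))" unfolding mtrace_def using assms by simp
  also have "\<dots> = (\<Sum>i<m. fb m k X Y $$ (i,i)) + (\<Sum>i<k. fb m k X Y $$ (m+i,m+i))" by (rule sum_split)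
  also have "(\<Sum>i<m. fb m k X Y $$ (i,i)) = mtrace X" unfolding mtrace_def using assms
    by (intro sum.cong) (auto simp: fb_index[OF assms])
  also have "(\<Sum>i<k. fb m k X Y $$ (m+i,m+i)) = mtrace Y" unfolding mtrace_def using assms
    by (intro sum.cong) (auto simp: fb_index[OF assms])
  finally show ?thesis .
qed

lemma mtrace_smult: "A \<in> carrier_mat n n \<Longrightarrow> mtrace (c \<cdot>\<^sub>m A) = c * mtrace A"
  unfolding mtrace_def by (simp add: sum_distrib_left)

lemma smult_smult_mat: "(a::complex) \<cdot>\<^sub>m (b \<cdot>\<^sub>m A) = (a * b) \<cdot>\<^sub>m A"
  by (intro eq_matI) auto

lemma G:
  assumes X: "psd m X" and Y: "psd k Y" and tX: "mtrace X = 1" and tY: "mtrace Y = 1"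
  shows "trace_norm (complex_of_real \<Delta> \<cdot>\<^sub>m fb m k X (- Y)) = 2 * \<bar>\<Delta>\<bar>"
proof -
  have Xc: "X \<in> carrier_mat m m" and Yc: "Y \<in> carrier_mat k k" using X Y psd_def by auto
  define M where "M = fb m k X (- Y)"
  define N where "N = fb m k X Y"
  define D where "D = complex_of_real \<Delta> \<cdot>\<^sub>m M"
  define B where "B = complex_of_real \<bar>\<Delta>\<bar> \<cdot>\<^sub>m N"
  have Mc: "M \<in> carrier_mat (m+k) (m+k)" and Nc: "N \<in> carrier_mat (m+k) (m+k)"
    unfolding M_def N_def using Xc Yc by auto
  have hD: "herm (m+k) D" unfolding D_def M_def
    by (intro herm_smult herm_fb herm_uminus psd_herm' X Y)
  have adjD: "adj D = D" by (rule herm_adj[OF hD])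
  have z: "- 0\<^sub>m m k = (0\<^sub>m m k :: complex mat)" by (intro eq_matI) auto
  have MM: "M * M = N * N" unfolding M_def N_def
    using Xc Yc by (simp add: mult_four_block_mat[OF Xc zero_carrier_mat zero_carrier_mat uminus_carrier_mat[OF Yc] Xc zero_carrier_mat zero_carrier_mat uminus_carrier_mat[OF Yc]]
      mult_four_block_mat[OF Xc zero_carrier_mat zero_carrier_mat Yc Xc zero_carrier_mat zero_carrier_mat Yc] z)
  have DD: "D * D = (complex_of_real \<Delta> * complex_of_real \<Delta>) \<cdot>\<^sub>m (M * M)"
    unfolding D_def using Mc by (simp add: mult_smult_assoc_mat[of _ "m+k" "m+k"] mult_smult_distrib[of _ "m+k" "m+k"] smult_smult_mat)
  have BB: "B * B = (complex_of_real \<bar>\<Delta>\<bar> * complex_of_real \<bar>\<Delta>\<bar>) \<cdot>\<^sub>m (N * N)"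
    unfolding B_def using Nc by (simp add: mult_smult_assoc_mat[of _ "m+k" "m+k"] mult_smult_distrib[of _ "m+k" "m+k"] smult_smult_mat)
  have e: "complex_of_real \<bar>\<Delta>\<bar> * complex_of_real \<bar>\<Delta>\<bar> = complex_of_real \<Delta> * complex_of_real \<Delta>"
    by (metis of_real_mult abs_mult_self_eq)
  have BD: "B * B = adj D * D" unfolding adjD DD BB MM e by (rule refl)
  have pB: "psd (m+k) B" unfolding B_def N_def by (intro psd_smult psd_fb X Y) simp
  have "trace_norm D = Re (mtrace B)"
    by (rule trace_norm_eq[OF _ pB BD]) (use Mc D_def in simp)
  also have "mtrace B = complex_of_real \<bar>\<Delta>\<bar> * 2" unfolding B_def N_def
    using Xc Yc tX tY by (simp add: mtrace_smult[of _ "m+k"] mtrace_fb)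
  finally show ?thesis unfolding D_def M_def by simp
qed

lemma sum_reindex: "(\<Sum>i<(d::nat)*d'. f i) = (\<Sum>k<d. \<Sum>b<d'. f (k*d'+b))"
proof (induct d)
  case 0 then show ?case by simp
next
  case (Suc d)
  have "(\<Sum>i<Suc d * d'. f i) = (\<Sum>i<d*d' + d'. f i)" by (simp add: add.commute)
  also have "\<dots> = (\<Sum>i<d*d'. f i) + (\<Sum>b<d'. f (d*d' + b))" by (rule sum_split)
  also have "\<dots> = (\<Sum>k<Suc d. \<Sum>b<d'. f (k*d'+b))" using Suc by (simp add: mult.commute)
  finally show ?case .
qed

lemma divmod_aux: assumes "(k::nat) < d" "b < d'" shows "(k*d'+b) div d' = k" "(k*d'+b) mod d' = b"
  using assms by auto

definition ptr :: "nat \<Rightarrow> nat \<Rightarrow> complex mat \<Rightarrow> complex mat" where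
  "ptr d d' X = mat d' d' (\<lambda>(b,b'). \<Sum>k<d. X $$ (k*d'+b, k*d'+b'))"

lemma sum_if_const: "(\<Sum>x\<in>A. if P then f x else 0) = (if P then sum f A else (0::complex))"
  by auto

lemma ptr_trace: assumes "X \<in> carrier_mat (d*d') (d*d')" shows "mtrace (ptr d d' X) = mtrace X"
proof -
  have "mtrace (ptr d d' X) = (\<Sum>b<d'. \<Sum>k<d. X $$ (k*d'+b, k*d'+b))" unfolding mtrace_def ptr_def by simp
  also have "\<dots> = (\<Sum>k<d. \<Sum>b<d'. X $$ (k*d'+b, k*d'+b))" by (rule sum.swap)
  also have "\<dots> = mtrace X" unfolding mtrace_def using assms by (simp add: sum_reindex)
  finally show ?thesis .
qed

lemma ptr_psd: assumes X: "psd (d*d') X" shows "psd d' (ptr d d' X)"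
proof -
  have Xc: "X \<in> carrier_mat (d*d') (d*d')" using X psd_def by auto
  show ?thesis unfolding psd_alt
  proof (rule conjI)
    show "ptr d d' X \<in> carrier_mat d' d'" unfolding ptr_def by simp
  next
    show "\<forall>w\<in>carrier_vec d'. Im (sf d' (ptr d d' X) w w) = 0 \<and> Re (sf d' (ptr d d' X) w w) \<ge> 0"
    proof
      fix w :: "complex vec" assume w: "w \<in> carrier_vec d'"
      define v where "v k = vec (d*d') (\<lambda>i. if i div d' = k then w $ (i mod d') else 0)" for k
      have vc: "v k \<in> carrier_vec (d*d')" for k unfolding v_def by simp
      have sfv: "sf (d*d') X (v k) (v k) = (\<Sum>b<d'. \<Sum>b'<d'. cnj (w $ b) * X $$ (k*d'+b, k*d'+b') * w $ b')"
        if k: "k < d" for k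
      proof -
        have "sf (d*d') X (v k) (v k) = (\<Sum>k1<d. \<Sum>b<d'. \<Sum>k2<d. \<Sum>b'<d'.
            cnj ((v k) $ (k1*d'+b)) * X $$ (k1*d'+b, k2*d'+b') * (v k) $ (k2*d'+b'))"
          unfolding sf_def sum_reindex ..
        also have "\<dots> = (\<Sum>k1<d. \<Sum>b<d'. \<Sum>k2<d. \<Sum>b'<d'.
            (if k1 = k then (if k2 = k then cnj (w $ b) * X $$ (k1*d'+b, k2*d'+b') * w $ b' else 0) else 0))"
        proof (intro sum.cong refl)
          fix k1 b k2 b' assume "k1 \<in> {..<d}" "b \<in> {..<d'}" "k2 \<in> {..<d}" "b' \<in> {..<d'}"
          then have l: "k1 < d" "b < d'" "k2 < d" "b' < d'" by auto
          have i1: "k1*d'+b < d*d'"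
          proof -
            have "k1*d'+b < (k1+1)*d'" using l by simp
            also have "\<dots> \<le> d*d'" using l by (intro mult_le_mono1) simp
            finally show ?thesis .
          qed
          have i2: "k2*d'+b' < d*d'"
          proof -
            have "k2*d'+b' < (k2+1)*d'" using l by simp
            also have "\<dots> \<le> d*d'" using l by (intro mult_le_mono1) simp
            finally show ?thesis .
          qed
          show "cnj ((v k) $ (k1*d'+b)) * X $$ (k1*d'+b, k2*d'+b') * (v k) $ (k2*d'+b') =
            (if k1 = k then (if k2 = k then cnj (w $ b) * X $$ (k1*d'+b, k2*d'+b') * w $ b' else 0) else 0)"
            using i1 i2 l by (simp add: v_def divmod_aux)
        qed
        also have "\<dots> = (\<Sum>b<d'. \<Sum>b'<d'. cnj (w $ b) * X $$ (k*d'+b, k*d'+b') * w $ b')"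
          using k by (simp add: sum_if_const)
        finally show ?thesis .
      qed
      have "sf d' (ptr d d' X) w w = (\<Sum>b<d'. \<Sum>b'<d'. \<Sum>k<d. cnj (w $ b) * X $$ (k*d'+b, k*d'+b') * w $ b')"
        unfolding sf_def ptr_def by (intro sum.cong refl) (simp add: sum_distrib_left sum_distrib_right)
      also have "\<dots> = (\<Sum>k<d. \<Sum>b<d'. \<Sum>b'<d'. cnj (w $ b) * X $$ (k*d'+b, k*d'+b') * w $ b')"
        by (simp only: sum.swap[of _ "{..<d'}" "{..<d}"])
      also have "\<dots> = (\<Sum>k<d. sf (d*d') X (v k) (v k))" by (intro sum.cong refl) (simp add: sfv)
      finally have eq: "sf d' (ptr d d' X) w w = (\<Sum>k<d. sf (d*d') X (v k) (v k))" .
      have P: "Im (sf (d*d') X (v k) (v k)) = 0 \<and> Re (sf (d*d') X (v k) (v k)) \<ge> 0" for k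
        using X vc unfolding psd_alt by blast
      show "Im (sf d' (ptr d d' X) w w) = 0 \<and> Re (sf d' (ptr d d' X) w w) \<ge> 0"
        unfolding eq using P by (simp add: Im_sum Re_sum sum_nonneg)
    qed
  qed
qed

lemma erasure_dims: "erasure d \<epsilon> R \<in> carrier_mat (Suc d) (Suc d)"
  unfolding erasure_def embedH_def eproj_def by simp

lemma erasure_index: assumes "a < Suc d" "a' < Suc d"
  shows "erasure d \<epsilon> R $$ (a,a') = complex_of_real \<epsilon> * (if a < d \<and> a' < d then R $$ (a,a') else 0)
     + complex_of_real (1 - \<epsilon>) * mtrace R * (if a = d \<and> a' = d then 1 else 0)"
  unfolding erasure_def embedH_def eproj_def using assms by simp

lemma idx_facts:
  assumes "0 < d'" "i < Suc d * d'"
  shows "i div d' < Suc d" "i div d' < d \<longleftrightarrow> i < d * d'" "i div d' * d' + i mod d' = i"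
    "d * d' \<le> i \<Longrightarrow> i div d' = d \<and> i mod d' = i - d * d'" "i mod d' < d'"
proof -
  show "i div d' < Suc d" using assms by (simp add: div_less_iff_less_mult)
  show "i div d' < d \<longleftrightarrow> i < d * d'" using assms by (simp add: div_less_iff_less_mult)
  show "i div d' * d' + i mod d' = i" by simp
  show "i mod d' < d'" using assms by simp
  assume le: "d * d' \<le> i"
  obtain r where r: "i = d * d' + r" using le le_Suc_ex by blast
  have "r < d'" using assms r by simp
  then show "i div d' = d \<and> i mod d' = i - d * d'" using r assms by simp
qed

lemma tensor_index:
  assumes d': "0 < d'" and i: "i < Suc d * d'" and j: "j < Suc d * d'"
  shows "tensor_id d (Suc d) d' (erasure d \<epsilon>) X $$ (i,j) =
    complex_of_real \<epsilon> * (if i < d*d' \<and> j < d*d' then X $$ (i,j) else 0)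
    + complex_of_real (1 - \<epsilon>) * (if d*d' \<le> i \<and> d*d' \<le> j then ptr d d' X $$ (i - d*d', j - d*d') else 0)"
proof -
  note fi = idx_facts[OF d' i] and fj = idx_facts[OF d' j]
  have "tensor_id d (Suc d) d' (erasure d \<epsilon>) X $$ (i,j) =
      erasure d \<epsilon> (block d d' X (i mod d') (j mod d')) $$ (i div d', j div d')"
    unfolding tensor_id_def using i j by simp
  also have "\<dots> = complex_of_real \<epsilon> * (if i div d' < d \<and> j div d' < d then
        (block d d' X (i mod d') (j mod d')) $$ (i div d', j div d') else 0)
     + complex_of_real (1 - \<epsilon>) * (mtrace (block d d' X (i mod d') (j mod d')) *
        (if i div d' = d \<and> j div d' = d then 1 else 0))"
    unfolding erasure_index[OF fi(1) fj(1)] by (simp only: mult.assoc)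
  also have "(if i div d' < d \<and> j div d' < d then
        (block d d' X (i mod d') (j mod d')) $$ (i div d', j div d') else 0)
      = (if i < d*d' \<and> j < d*d' then X $$ (i,j) else 0)"
    unfolding block_def using fi fj by auto
  also have "mtrace (block d d' X (i mod d') (j mod d')) * (if i div d' = d \<and> j div d' = d then 1 else 0)
      = (if d*d' \<le> i \<and> d*d' \<le> j then ptr d d' X $$ (i - d*d', j - d*d') else 0)"
  proof (cases "d*d' \<le> i \<and> d*d' \<le> j")
    case True
    then have "i div d' = d \<and> i mod d' = i - d * d'" "j div d' = d \<and> j mod d' = j - d * d'"
      using fi(4) fj(4) by auto
    then show ?thesis using True fi(5) fj(5) unfolding block_def ptr_def mtrace_def by simp
  next
    case False
    then have "\<not> (i div d' = d \<and> j div d' = d)" using fi(2) fj(2) by auto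
    then have "(if i div d' = d \<and> j div d' = d then 1 else 0) = (0::complex)" by simp
    moreover have "(if d*d' \<le> i \<and> d*d' \<le> j then ptr d d' X $$ (i - d*d', j - d*d') else 0) = 0"
      using False by auto
    ultimately show ?thesis by simp
  qed
  finally show ?thesis by (simp add: mult.assoc)
qed

lemma tensor_dims: "dim_row (tensor_id d m d' N X) = m * d'" "dim_col (tensor_id d m d' N X) = m * d'"
  unfolding tensor_id_def by simp_all

lemma tensor_diff:
  assumes d': "0 < d'" and Xc: "X \<in> carrier_mat (d*d') (d*d')"
  shows "tensor_id d (Suc d) d' (erasure d \<epsilon>1) X - tensor_id d (Suc d) d' (erasure d \<epsilon>2) X
    = complex_of_real (\<epsilon>1 - \<epsilon>2) \<cdot>\<^sub>m fb (d*d') d' X (- ptr d d' X)"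
proof (rule eq_matI)
  have Pc: "ptr d d' X \<in> carrier_mat d' d'" unfolding ptr_def by simp
  fix i j assume "i < dim_row (complex_of_real (\<epsilon>1 - \<epsilon>2) \<cdot>\<^sub>m fb (d*d') d' X (- ptr d d' X))"
    "j < dim_col (complex_of_real (\<epsilon>1 - \<epsilon>2) \<cdot>\<^sub>m fb (d*d') d' X (- ptr d d' X))"
  then have ij: "i < d*d' + d'" "j < d*d' + d'" using Xc Pc by auto
  then have ij': "i < Suc d * d'" "j < Suc d * d'" by (auto simp: add.commute)
  have "fb (d*d') d' X (- ptr d d' X) $$ (i,j) = (if i < d*d' \<and> j < d*d' then X $$ (i,j)
     else if d*d' \<le> i \<and> d*d' \<le> j then - ptr d d' X $$ (i - d*d', j - d*d') else 0)"
    using fb_index[OF Xc uminus_carrier_mat[OF Pc] ij] ij Pc by auto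
  then show "(tensor_id d (Suc d) d' (erasure d \<epsilon>1) X - tensor_id d (Suc d) d' (erasure d \<epsilon>2) X) $$ (i,j)
    = (complex_of_real (\<epsilon>1 - \<epsilon>2) \<cdot>\<^sub>m fb (d*d') d' X (- ptr d d' X)) $$ (i,j)"
  proof -
    assume fbi: "fb (d*d') d' X (- ptr d d' X) $$ (i,j) = (if i < d*d' \<and> j < d*d' then X $$ (i,j)
     else if d*d' \<le> i \<and> d*d' \<le> j then - ptr d d' X $$ (i - d*d', j - d*d') else 0)"
    have "(tensor_id d (Suc d) d' (erasure d \<epsilon>1) X - tensor_id d (Suc d) d' (erasure d \<epsilon>2) X) $$ (i,j)
      = tensor_id d (Suc d) d' (erasure d \<epsilon>1) X $$ (i,j) - tensor_id d (Suc d) d' (erasure d \<epsilon>2) X $$ (i,j)"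
      using ij' by (simp add: tensor_dims)
    also have "\<dots> = complex_of_real (\<epsilon>1 - \<epsilon>2) * fb (d*d') d' X (- ptr d d' X) $$ (i,j)"
      unfolding tensor_index[OF d' ij'] fbi
      by (cases "i < d*d'"; cases "j < d*d'") (simp_all add: algebra_simps)
    also have "\<dots> = (complex_of_real (\<epsilon>1 - \<epsilon>2) \<cdot>\<^sub>m fb (d*d') d' X (- ptr d d' X)) $$ (i,j)"
      using ij Xc Pc by simp
    finally show ?thesis .
  qed
qed (use Xc in \<open>auto simp: tensor_id_def ptr_def add.commute\<close>)

lemma erasure_diff:
  assumes Rc: "R \<in> carrier_mat d d" and tr: "mtrace R = 1"
  shows "erasure d \<epsilon>1 R - erasure d \<epsilon>2 R = complex_of_real (\<epsilon>1 - \<epsilon>2) \<cdot>\<^sub>m fb d 1 R (- 1\<^sub>m 1)"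
proof (rule eq_matI)
  fix i j assume "i < dim_row (complex_of_real (\<epsilon>1 - \<epsilon>2) \<cdot>\<^sub>m fb d 1 R (- 1\<^sub>m 1))"
    "j < dim_col (complex_of_real (\<epsilon>1 - \<epsilon>2) \<cdot>\<^sub>m fb d 1 R (- 1\<^sub>m 1))"
  then have ij: "i < d + 1" "j < d + 1" using Rc by auto
  have "fb d 1 R (- 1\<^sub>m 1) $$ (i,j) = (if i < d \<and> j < d then R $$ (i,j)
     else if d \<le> i \<and> d \<le> j then - 1 else 0)"
    using fb_index[OF Rc _ ij, of "- 1\<^sub>m 1"] ij by auto
  moreover have "(erasure d \<epsilon>1 R - erasure d \<epsilon>2 R) $$ (i,j) = erasure d \<epsilon>1 R $$ (i,j) - erasure d \<epsilon>2 R $$ (i,j)"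
    using ij erasure_dims[of d] by (auto simp: erasure_def embedH_def eproj_def)
  ultimately show "(erasure d \<epsilon>1 R - erasure d \<epsilon>2 R) $$ (i,j) = (complex_of_real (\<epsilon>1 - \<epsilon>2) \<cdot>\<^sub>m fb d 1 R (- 1\<^sub>m 1)) $$ (i,j)"
    using ij Rc tr
    by (cases "i < d"; cases "j < d") (simp_all add: erasure_index algebra_simps)
qed (use Rc in \<open>auto simp: erasure_def embedH_def eproj_def\<close>)

lemma SUP_const_on: assumes "A \<noteq> {}" "\<And>x. x \<in> A \<Longrightarrow> f x = c" shows "(SUP x\<in>A. f x) = (c::real)"
proof -
  have "(SUP x\<in>A. f x) = (SUP x\<in>A. c)" by (rule SUP_cong) (use assms in auto)
  also have "\<dots> = c" by (rule cSUP_const[OF assms(1)])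
  finally show ?thesis .
qed

lemma psd_one: "psd 1 (1\<^sub>m 1)"
  unfolding psd_alt
proof (intro conjI ballI)
  fix v :: "complex vec" assume "v \<in> carrier_vec 1"
  have "sf 1 (1\<^sub>m 1) v v = cnj (v $ 0) * v $ 0" unfolding sf_def by simp
  also have "\<dots> = complex_of_real ((cmod (v $ 0))^2)" by (subst complex_norm_square, rule mult.commute)
  finally have e: "sf 1 (1\<^sub>m 1) v v = complex_of_real ((cmod (v $ 0))^2)" .
  show "Im (sf 1 (1\<^sub>m 1) v v) = 0" unfolding e by simp
  show "Re (sf 1 (1\<^sub>m 1) v v) \<ge> 0" unfolding e by simp
qed simp

lemma psd_zero: "psd n (0\<^sub>m n n)"
  unfolding psd_alt sf_def by simp

lemma mtrace_one: "mtrace (1\<^sub>m 1) = 1" unfolding mtrace_def by simp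

lemma mtrace_zero: "mtrace (0\<^sub>m n n) = 0" unfolding mtrace_def by simp

lemma density_exists: assumes "d > (0::nat)" shows "\<exists>\<rho>. density d \<rho>"
proof -
  obtain n where n: "d = 1 + n" using assms by (metis add.commute add.left_neutral less_imp_Suc_add plus_1_eq_Suc)
  have "psd (1 + n) (fb 1 n (1\<^sub>m 1) (0\<^sub>m n n))" by (rule psd_fb[OF psd_one psd_zero])
  moreover have "mtrace (fb 1 n (1\<^sub>m 1) (0\<^sub>m n n)) = 1"
    unfolding mtrace_fb[OF one_carrier_mat zero_carrier_mat] mtrace_one mtrace_zero by simp
  ultimately show ?thesis unfolding density_def n by blast
qed

theorem theorem10:
  fixes d :: nat and \<epsilon>1 \<epsilon>2 :: real
  assumes "d > 0"
    and "0 \<le> \<epsilon>1" "\<epsilon>1 \<le> 1" and "0 \<le> \<epsilon>2" "\<epsilon>2 \<le> 1"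
  shows "(SUP \<rho> \<in> {\<rho>. density d \<rho>}.
            1/2 + 1/4 * trace_norm (erasure d \<epsilon>1 \<rho> - erasure d \<epsilon>2 \<rho>))
       = (SUP p \<in> {(d', \<rho>). d' > 0 \<and> density (d * d') \<rho>}.
            1/2 + 1/4 * trace_norm (tensor_id d (Suc d) (fst p) (erasure d \<epsilon>1) (snd p)
                                   - tensor_id d (Suc d) (fst p) (erasure d \<epsilon>2) (snd p)))"
proof -
  define c where "c = 1/2 + 1/4 * (2 * \<bar>\<epsilon>1 - \<epsilon>2\<bar>)"
  obtain \<rho>0 where r0: "density d \<rho>0" using density_exists[OF assms(1)] by blast
  have L: "(SUP \<rho> \<in> {\<rho>. density d \<rho>}.
            1/2 + 1/4 * trace_norm (erasure d \<epsilon>1 \<rho> - erasure d \<epsilon>2 \<rho>)) = c"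
  proof (rule SUP_const_on)
    show "{\<rho>. density d \<rho>} \<noteq> {}" using r0 by blast
    fix \<rho> assume "\<rho> \<in> {\<rho>. density d \<rho>}"
    then have p: "psd d \<rho>" and t: "mtrace \<rho> = 1" unfolding density_def by auto
    have Rc: "\<rho> \<in> carrier_mat d d" using p psd_def by auto
    show "1/2 + 1/4 * trace_norm (erasure d \<epsilon>1 \<rho> - erasure d \<epsilon>2 \<rho>) = c"
      unfolding erasure_diff[OF Rc t] G[OF p psd_one t mtrace_one] c_def ..
  qed
  have R: "(SUP p \<in> {(d', \<rho>). d' > 0 \<and> density (d * d') \<rho>}.
            1/2 + 1/4 * trace_norm (tensor_id d (Suc d) (fst p) (erasure d \<epsilon>1) (snd p)
                                   - tensor_id d (Suc d) (fst p) (erasure d \<epsilon>2) (snd p))) = c"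
  proof (rule SUP_const_on)
    have "density (d * 1) \<rho>0" using r0 by simp
    then show "{(d', \<rho>). d' > 0 \<and> density (d * d') \<rho>} \<noteq> {}" by blast
    fix p assume "p \<in> {(d', \<rho>). d' > 0 \<and> density (d * d') \<rho>}"
    then obtain d' X where pe: "p = (d', X)" and d': "d' > 0" and dX: "density (d * d') X" by auto
    then have pX: "psd (d * d') X" and t: "mtrace X = 1" unfolding density_def by auto
    have Xc: "X \<in> carrier_mat (d*d') (d*d')" using pX psd_def by auto
    have tY: "mtrace (ptr d d' X) = 1" using ptr_trace[OF Xc] t by simp
    show "1/2 + 1/4 * trace_norm (tensor_id d (Suc d) (fst p) (erasure d \<epsilon>1) (snd p)
                                   - tensor_id d (Suc d) (fst p) (erasure d \<epsilon>2) (snd p)) = c"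
      unfolding pe fst_conv snd_conv tensor_diff[OF d' Xc] G[OF pX ptr_psd[OF pX] t tY] c_def ..
  qed
  show ?thesis using L R by simp
qed

end
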